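(* Let $p$ be a prime, $0\le i\le p-1$, $r\ge0$ an integer, and $k$ a positive integer not divisible by $p$. Then $|Q_{i,r}^{(k)}|_m\le p^{(r+1)/2}=\sqrt{p(d_r+1)}$, where $d_r=p^r-1$.
   Context: Fix a prime $p$ and a primitive $p$-th root of unity $\xi$. Let $D$ be the $p\times p$ matrix $D_{j,l}=\xi^{jl}$, $j,l\in\{0,\dots,p-1\}$. Define polynomials $Q_{0,r},\dots,Q_{p-1,r}\in\mathbb{C}[x]$ recursively: $Q_{j,0}:=1$ for all $j$, and for $r\ge0$, $$(Q_{0,r+1},Q_{1,r+1},\dots,Q_{p-1,r+1})^T:=D\cdot\big(Q_{0,r},\,x^{p^r}Q_{1,r},\,x^{2p^r}Q_{2,r},\dots,x^{(p-1)p^r}Q_{p-1,r}\big)^T.$$ Each $Q_{j,r}$ has degree $d_r=p^r-1$ and all coefficients of absolute value 1. For a complex polynomial $g(x)=\sum_ia_ix^i$, $|g|_m:=\max_{|x|=1}|g(x)|$ and $g^{(k)}(x):=\sum_ia_i^kx^i$ (Hadamard power). *)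

theory Defs
  imports "HOL-Analysis.Analysis" "HOL-Computational_Algebra.Polynomial"
begin

text \<open>Rudin-Shapiro-like polynomials Q_{j,r} for prime p and a p-th root of unity xi:
  (Q_{0,r+1},...,Q_{p-1,r+1})^T = D (Q_{0,r}, x^{p^r} Q_{1,r}, ..., x^{(p-1)p^r} Q_{p-1,r})^T
  with D_{j,l} = xi^{j l}.\<close>
fun Qpoly :: "nat \<Rightarrow> complex \<Rightarrow> nat \<Rightarrow> nat \<Rightarrow> complex poly" where
  "Qpoly p \<xi> j 0 = 1"
| "Qpoly p \<xi> j (Suc r) =
     (\<Sum>l<p. smult (\<xi> ^ (j * l)) (monom 1 (l * p ^ r) * Qpoly p \<xi> l r))"

definition hadamard_pow :: "complex poly \<Rightarrow> nat \<Rightarrow> complex poly" where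
  "hadamard_pow g k = Poly (map (\<lambda>c. c ^ k) (coeffs g))"

definition circle_max :: "complex poly \<Rightarrow> real" where
  "circle_max g = (SUP x\<in>{z. cmod z = 1}. cmod (poly g x))"

end

theory Submission imports Defs begin

lemma coeff_hadamard: "k > 0 \<Longrightarrow> coeff (hadamard_pow g k) n = coeff g n ^ k"
  unfolding hadamard_pow_def
  by (simp add: nth_default_map_eq[where dflt'=0] nth_default_coeffs_eq)

lemma Q_coeff_zero: "p ^ r \<le> n \<Longrightarrow> coeff (Qpoly p \<xi> j r) n = 0"
proof (induction r arbitrary: j n)
  case 0
  then show ?case by (simp add: coeff_1)
next
  case (Suc r)
  have "coeff (Qpoly p \<xi> j (Suc r)) n =
     (\<Sum>l<p. \<xi> ^ (j * l) * (if l * p ^ r \<le> n then coeff (Qpoly p \<xi> l r) (n - l * p ^ r) else 0))"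
    by (auto simp: coeff_sum coeff_monom_mult intro!: sum.cong)
  also have "\<dots> = 0"
  proof (rule sum.neutral, intro ballI)
    fix l assume "l \<in> {..<p}"
    hence "l + 1 \<le> p" by simp
    hence "(l+1) * p^r \<le> p * p^r" by (rule mult_right_mono) simp
    hence "p ^ r \<le> n - l * p ^ r" using Suc.prems by (simp add: algebra_simps)
    thus "\<xi> ^ (j * l) * (if l * p ^ r \<le> n then coeff (Qpoly p \<xi> l r) (n - l * p ^ r) else 0) = 0"
      using Suc.IH by simp
  qed
  finally show ?case .
qed

lemma Q_coeff_Suc:
  "coeff (Qpoly p \<xi> j (Suc r)) n =
     (if n < p * p ^ r then \<xi> ^ (j * (n div p ^ r)) * coeff (Qpoly p \<xi> (n div p ^ r) r) (n mod p ^ r) else 0)"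
proof -
  have e: "coeff (Qpoly p \<xi> j (Suc r)) n =
     (\<Sum>l<p. \<xi> ^ (j * l) * (if l * p ^ r \<le> n then coeff (Qpoly p \<xi> l r) (n - l * p ^ r) else 0))"
    by (auto simp: coeff_sum coeff_monom_mult intro!: sum.cong)
  have z: "\<xi> ^ (j * l) * (if l * p ^ r \<le> n then coeff (Qpoly p \<xi> l r) (n - l * p ^ r) else 0) = 0"
    if "l \<noteq> n div p ^ r" "l < p" for l
  proof (cases "l * p ^ r \<le> n")
    case True
    have pos: "p ^ r > 0"
    proof (rule ccontr)
      assume "\<not> p ^ r > 0" hence "p ^ r = 0" by simp
      thus False using that(2) by (simp add: power_eq_0_iff)
    qed
    have "l \<le> n div p ^ r" using True pos by (simp add: less_eq_div_iff_mult_less_eq)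
    hence "l < n div p ^ r" using that by simp
    hence "Suc l \<le> n div p ^ r" by simp
    hence "Suc l * p ^ r \<le> n" using pos by (simp add: less_eq_div_iff_mult_less_eq)
    hence "p ^ r \<le> n - l * p ^ r" by simp
    then show ?thesis using True Q_coeff_zero by simp
  qed simp
  show ?thesis
  proof (cases "n < p * p ^ r")
    case True
    hence pos: "p ^ r > 0" by (metis gr0I mult_0_right not_less_zero)
    have lt: "n div p ^ r < p" using True pos by (simp add: div_less_iff_less_mult mult.commute)
    define T where "T l = \<xi> ^ (j * l) * (if l * p ^ r \<le> n then coeff (Qpoly p \<xi> l r) (n - l * p ^ r) else 0)" for l
    have zz: "(\<Sum>l\<in>{..<p} - {n div p ^ r}. T l) = 0"
      by (intro sum.neutral ballI) (unfold T_def, rule z, auto)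
    have "coeff (Qpoly p \<xi> j (Suc r)) n = (\<Sum>l<p. T l)" unfolding e T_def ..
    also have "\<dots> = T (n div p ^ r) + (\<Sum>l\<in>{..<p} - {n div p ^ r}. T l)"
      by (rule sum.remove) (use lt in auto)
    also have "\<dots> = \<xi> ^ (j * (n div p ^ r)) *
        (if n div p ^ r * p ^ r \<le> n then coeff (Qpoly p \<xi> (n div p ^ r) r) (n - n div p ^ r * p ^ r) else 0)"
      using zz unfolding T_def by simp
    also have "\<dots> = \<xi> ^ (j * (n div p ^ r)) * coeff (Qpoly p \<xi> (n div p ^ r) r) (n mod p ^ r)"
      by (simp add: minus_div_mult_eq_mod div_times_less_eq_dividend)
    finally show ?thesis using True by simp
  next
    case False
    then show ?thesis using Q_coeff_zero[of p "Suc r" n] by simp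
  qed
qed

lemma Q_hadamard: "k > 0 \<Longrightarrow> coeff (Qpoly p \<xi> j r) n ^ k = coeff (Qpoly p (\<xi> ^ k) j r) n"
proof (induction r arbitrary: j n)
  case 0
  then show ?case by (simp add: coeff_1)
next
  case (Suc r)
  then show ?case by (simp only: Q_coeff_Suc) (simp add: power_mult_distrib power_mult[symmetric] mult.commute[of k] mult.assoc)
qed

lemma Q_hadamard_eq: "k > 0 \<Longrightarrow> hadamard_pow (Qpoly p \<xi> j r) k = Qpoly p (\<xi> ^ k) j r"
  by (rule poly_eqI) (simp add: coeff_hadamard Q_hadamard)

lemma root_pow_eq1:
  fixes \<eta> :: complex
  assumes "\<eta> ^ p = 1" "\<forall>j. 0 < j \<and> j < p \<longrightarrow> \<eta> ^ j \<noteq> 1" "\<eta> ^ n = 1" "p > 0"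
  shows "p dvd n"
proof -
  have "\<eta> ^ n = \<eta> ^ (n mod p)"
    by (metis assms(1) div_mult_mod_eq mult.commute power_add power_mult power_one mult_1)
  hence "\<eta> ^ (n mod p) = 1" using assms(3) by simp
  moreover have "p > 0" using assms(4) .
  ultimately have "n mod p = 0" using assms(2) by (meson mod_less_divisor not_gr0)
  thus ?thesis by auto
qed

lemma norm_root: fixes \<eta> :: complex assumes "\<eta> ^ p = 1" "p > 0" shows "cmod \<eta> = 1"
proof -
  have "cmod \<eta> ^ p = 1" using assms by (metis norm_one norm_power)
  thus ?thesis using assms(2) power_eq_imp_eq_base[of "cmod \<eta>" p 1] by simp
qed

lemma geo_zero:
  fixes q :: complex assumes "q ^ p = 1" "q \<noteq> 1" shows "(\<Sum>j<p. q ^ j) = 0"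
  using assms by (simp add: geometric_sum)

lemma swap3: "(\<Sum>j<p. \<Sum>l<p. \<Sum>m<p. f j l m) = (\<Sum>l<p. \<Sum>m<p. \<Sum>j<p. (f j l m :: complex))"
proof -
  have "(\<Sum>j<p. \<Sum>l<p. \<Sum>m<p. f j l m) = (\<Sum>l<p. \<Sum>j<p. \<Sum>m<p. f j l m)" by (rule sum.swap)
  also have "\<dots> = (\<Sum>l<p. \<Sum>m<p. \<Sum>j<p. f j l m)" by (rule sum.cong[OF refl], rule sum.swap)
  finally show ?thesis .
qed

lemma parseval:
  fixes \<eta> :: complex and a :: "nat \<Rightarrow> complex"
  assumes "\<eta> ^ p = 1" "\<forall>j. 0 < j \<and> j < p \<longrightarrow> \<eta> ^ j \<noteq> 1"
  shows "(\<Sum>j<p. (cmod (\<Sum>l<p. \<eta> ^ (j * l) * a l))\<^sup>2) = real p * (\<Sum>l<p. (cmod (a l))\<^sup>2)"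
proof (cases "p = 0")
  case True then show ?thesis by simp
next
  case False
  hence pp: "p > 0" by simp
  have n1: "cmod \<eta> = 1" using norm_root[OF assms(1) pp] .
  have inner: "(\<Sum>j<p. (\<eta> ^ l * cnj \<eta> ^ m) ^ j) = (if l = m then of_nat p else 0)"
    if "l < p" "m < p" for l m
  proof (cases "l = m")
    case True
    have "\<eta> ^ l * cnj \<eta> ^ m = 1" using True n1
      by (metis complex_norm_square mult.commute of_real_1 power_mult_distrib power_one
          complex_cnj_power one_power2)
    then show ?thesis using True by simp
  next
    case False
    have ne0: "\<eta> \<noteq> 0" using n1 by auto
    have cn: "cnj \<eta> = inverse \<eta>" using n1 ne0
      by (metis complex_norm_square mult.commute of_real_1 one_power2 inverse_unique)
    define q where "q = \<eta> ^ l * cnj \<eta> ^ m"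
    have q: "q = \<eta> ^ l / \<eta> ^ m" unfolding q_def cn by (simp add: divide_inverse power_inverse)
    have "q ^ p = 1" unfolding q
      by (metis assms(1) power_divide power_mult mult.commute power_one div_self one_neq_zero)
    moreover have "q \<noteq> 1"
    proof
      assume "q = 1"
      hence eq: "\<eta> ^ l = \<eta> ^ m" unfolding q using ne0 by (simp add: field_simps)
      show False
      proof (cases "l < m")
        case True
        have "\<eta> ^ m = \<eta> ^ l * \<eta> ^ (m - l)" using True by (simp add: power_add[symmetric])
        hence "\<eta> ^ (m - l) = 1" using eq ne0 by simp
        thus False using assms(2) True that by auto
      next
        case f: False
        hence "m < l" using False by simp
        hence "\<eta> ^ l = \<eta> ^ m * \<eta> ^ (l - m)" by (simp add: power_add[symmetric])
        hence "\<eta> ^ (l - m) = 1" using eq ne0 by simp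
        thus False using assms(2) \<open>m < l\<close> that by auto
      qed
    qed
    ultimately show ?thesis using False geo_zero unfolding q_def by simp
  qed
  have "complex_of_real (\<Sum>j<p. (cmod (\<Sum>l<p. \<eta> ^ (j * l) * a l))\<^sup>2)
      = (\<Sum>j<p. (\<Sum>l<p. \<eta> ^ (j * l) * a l) * cnj (\<Sum>m<p. \<eta> ^ (j * m) * a m))"
    by (simp only: of_real_sum complex_norm_square)
  also have "\<dots> = (\<Sum>j<p. \<Sum>l<p. \<Sum>m<p. a l * cnj (a m) * (\<eta> ^ l * cnj \<eta> ^ m) ^ j)"
  proof (intro sum.cong refl)
    fix j assume "j \<in> {..<p}"
    have t: "\<eta> ^ (j * l) * a l * (cnj \<eta> ^ (j * m) * cnj (a m)) = a l * cnj (a m) * (\<eta> ^ l * cnj \<eta> ^ m) ^ j"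
      for l m
    proof -
      have A: "\<eta> ^ (j * l) = (\<eta> ^ l) ^ j" by (metis mult.commute power_mult)
      have B: "cnj \<eta> ^ (j * m) = (cnj \<eta> ^ m) ^ j" by (metis mult.commute power_mult)
      show ?thesis unfolding A B power_mult_distrib by (simp only: ac_simps)
    qed
    show "(\<Sum>l<p. \<eta> ^ (j * l) * a l) * cnj (\<Sum>m<p. \<eta> ^ (j * m) * a m) =
        (\<Sum>l<p. \<Sum>m<p. a l * cnj (a m) * (\<eta> ^ l * cnj \<eta> ^ m) ^ j)"
      by (simp only: cnj_sum complex_cnj_mult complex_cnj_power sum_product t)
  qed
  also have "\<dots> = (\<Sum>l<p. \<Sum>m<p. \<Sum>j<p. a l * cnj (a m) * (\<eta> ^ l * cnj \<eta> ^ m) ^ j)"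
    by (rule swap3)
  also have "\<dots> = (\<Sum>l<p. \<Sum>m<p. a l * cnj (a m) * (\<Sum>j<p. (\<eta> ^ l * cnj \<eta> ^ m) ^ j))"
    by (simp add: sum_distrib_left)
  also have "\<dots> = (\<Sum>l<p. \<Sum>m<p. if l = m then a l * cnj (a m) * of_nat p else 0)"
    by (intro sum.cong refl) (simp add: inner)
  also have "\<dots> = (\<Sum>l<p. a l * cnj (a l) * of_nat p)"
    by simp
  also have "\<dots> = complex_of_real (real p * (\<Sum>l<p. (cmod (a l))\<^sup>2))"
    unfolding of_real_mult of_real_sum complex_norm_square by (simp add: sum_distrib_left mult.commute)
  finally show ?thesis using of_real_eq_iff by blast
qed

lemma energy:
  fixes \<eta> z :: complex
  assumes "\<eta> ^ p = 1" "\<forall>j. 0 < j \<and> j < p \<longrightarrow> \<eta> ^ j \<noteq> 1" "cmod z = 1"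
  shows "(\<Sum>j<p. (cmod (poly (Qpoly p \<eta> j r) z))\<^sup>2) = real p ^ Suc r"
proof (induction r)
  case 0
  then show ?case by simp
next
  case (Suc r)
  define a where "a l = z ^ (l * p ^ r) * poly (Qpoly p \<eta> l r) z" for l
  have pe: "poly (Qpoly p \<eta> j (Suc r)) z = (\<Sum>l<p. \<eta> ^ (j * l) * a l)" for j
    by (simp add: poly_sum poly_monom a_def)
  have na: "cmod (a l) = cmod (poly (Qpoly p \<eta> l r) z)" for l
    by (simp add: a_def norm_mult norm_power assms(3))
  have "(\<Sum>j<p. (cmod (poly (Qpoly p \<eta> j (Suc r)) z))\<^sup>2) = real p * (\<Sum>l<p. (cmod (a l))\<^sup>2)"
    unfolding pe by (rule parseval[OF assms(1,2)])
  also have "\<dots> = real p * real p ^ Suc r" by (simp add: na Suc.IH)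
  finally show ?case by simp
qed

theorem proposition4p3:
  fixes p i r k :: nat and \<xi> :: complex
  assumes "prime p"
    and "\<xi> ^ p = 1" and "\<forall>j. 0 < j \<and> j < p \<longrightarrow> \<xi> ^ j \<noteq> 1"
    and "i \<le> p - 1"
    and "k > 0" and "\<not> p dvd k"
  shows "circle_max (hadamard_pow (Qpoly p \<xi> i r) k) \<le> real p powr ((real r + 1) / 2)
       \<and> real p powr ((real r + 1) / 2) = sqrt (real p * (real (p ^ r - 1) + 1))"
proof -
  have p2: "p \<ge> 2" using assms(1) by (simp add: prime_ge_2_nat)
  have ip: "i < p" using assms(4) p2 by simp
  define \<eta> where "\<eta> = \<xi> ^ k"
  have e1: "\<eta> ^ p = 1" unfolding \<eta>_def
    by (metis assms(2) mult.commute power_mult power_one)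
  have e2: "\<forall>j. 0 < j \<and> j < p \<longrightarrow> \<eta> ^ j \<noteq> 1"
  proof (intro allI impI)
    fix j assume j: "0 < j \<and> j < p"
    show "\<eta> ^ j \<noteq> 1"
    proof
      assume "\<eta> ^ j = 1"
      hence "\<xi> ^ (k * j) = 1" unfolding \<eta>_def by (simp add: power_mult)
      hence "p dvd k * j" using root_pow_eq1[OF assms(2,3)] p2 by simp
      hence "p dvd j" using assms(1,6) by (simp add: prime_dvd_mult_iff)
      thus False using j by (simp add: nat_dvd_not_less)
    qed
  qed
  have had: "hadamard_pow (Qpoly p \<xi> i r) k = Qpoly p \<eta> i r"
    unfolding \<eta>_def using assms(5) by (rule Q_hadamard_eq)
  have sq: "real p powr ((real r + 1) / 2) = sqrt (real p ^ Suc r)"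
  proof -
    have "sqrt (real p ^ Suc r) = (real p powr real (Suc r)) powr (1/2)"
    proof -
      have "real p powr real (Suc r) = real p ^ Suc r" by (rule powr_realpow) (use p2 in simp)
      thus ?thesis by (simp add: powr_half_sqrt)
    qed
    also have "\<dots> = real p powr ((real r + 1) / 2)" proof -
      have "(real p powr real (Suc r)) powr (1/2) = real p powr (real (Suc r) * (1/2))"
        by (rule powr_powr)
      also have "real (Suc r) * (1/2) = (real r + 1) / 2" by simp
      finally show ?thesis .
    qed
    finally show ?thesis by simp
  qed
  have bound: "cmod (poly (Qpoly p \<eta> i r) z) \<le> sqrt (real p ^ Suc r)" if "cmod z = 1" for z
  proof (rule real_le_rsqrt)
    have "(cmod (poly (Qpoly p \<eta> i r) z))\<^sup>2 \<le> (\<Sum>j<p. (cmod (poly (Qpoly p \<eta> j r) z))\<^sup>2)"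
      by (rule member_le_sum) (use ip in auto)
    thus "(cmod (poly (Qpoly p \<eta> i r) z))\<^sup>2 \<le> real p ^ Suc r"
      using energy[OF e1 e2 that, where r=r] by linarith
  qed
  have "circle_max (hadamard_pow (Qpoly p \<xi> i r) k) \<le> sqrt (real p ^ Suc r)"
    unfolding circle_max_def had
  proof (rule cSUP_least)
    have "(1::complex) \<in> {z. cmod z = 1}" by simp
    thus "{z. cmod z = 1} \<noteq> {}" by blast
  next
    fix x assume "x \<in> {z. cmod z = 1}"
    thus "cmod (poly (Qpoly p \<eta> i r) x) \<le> sqrt (real p ^ Suc r)" using bound by blast
  qed
  moreover have "real p * (real (p ^ r - 1) + 1) = real p ^ Suc r"
  proof -
    have "1 \<le> p ^ r" using p2 by simp
    hence "real (p ^ r - 1) = real (p ^ r) - 1" by (simp add: of_nat_diff)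
    thus ?thesis by simp
  qed
  ultimately show ?thesis unfolding sq by metis
qed

end
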